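(* Let $X$ be a locally compact, Hausdorff, second countable space and $(Y,d)$ a complete metric space. A net $(f_\lambda)$ in $C_{od}(X,Y)$ is $\gamma$-Cauchy if and only if $(f_\lambda)$ converges in $\tau_{\iota,D}$ to some $f\in C_{od}(X,Y)$.
   Context: $C_{od}(X,Y)$ is the set of continuous functions $f:\mathrm{dom}(f)\to Y$ whose domain is an open subset of $X$ (including the empty function). $CL(X)$ is the set of closed subsets of $X$ (including $\emptyset$) with the Fell topology, generated by $(X\setminus K)^+=\{A: A\subseteq X\setminus K\}$ ($K$ compact) and $V^-=\{A: A\cap V\neq\emptyset\}$ ($V$ nonempty open). Let $D(f)=X\setminus\mathrm{dom}(f)$. The topology $\tau_{\iota,D}$ on $C_{od}(X,Y)$ is generated by the sets $\langle K,V\rangle=\{f: K\subseteq\mathrm{dom}(f),\ f(K)\subseteq V\}$ ($K\subseteq X$ compact, $V\subseteq Y$ open) and $D^{-1}(W)$ ($W$ Fell-open). A net $(f_\lambda)$ in $C_{od}(X,Y)$ is called $\gamma$-Cauchy if $(D(f_\lambda))$ converges in the Fell topology to some $A\in CL(X)$ and, in case $A\neq X$, for every nonempty compact $K\subseteq X\setminus A$ there exists $\lambda_K$ such that $K\subseteq\mathrm{dom}(f_\lambda)$ for all $\lambda>\lambda_K$ and the net $(f_\lambda|_K)_{\lambda>\lambda_K}$ is uniformly Cauchy. *)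

theory Defs
  imports "HOL-Analysis.Analysis"
begin

text \<open>Partial functions are represented as maps \<open>'a \<rightharpoonup> 'b\<close>; the domain is \<open>dom f\<close>.
  \<open>C_od\<close> = continuous maps with open domain (the empty map included).\<close>

definition C_od :: "('a::topological_space \<rightharpoonup> 'b::topological_space) set" where
  "C_od = {f. open (dom f) \<and> continuous_on (dom f) (\<lambda>x. the (f x))}"

definition Dset :: "('a \<rightharpoonup> 'b) \<Rightarrow> 'a set" where
  "Dset f = - dom f"

text \<open>Fell topology on CL(X) (closed sets, including the empty set).\<close>
definition fell_topology :: "'a::topological_space set topology" where
  "fell_topology = topology_generated_by
     ({{A. closed A \<and> A \<subseteq> - K} | K. compact K} \<union>
      {{A. closed A \<and> A \<inter> V \<noteq> {}} | V. open V \<and> V \<noteq> {}})"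

definition sub_KV :: "'a set \<Rightarrow> 'b set \<Rightarrow> ('a \<rightharpoonup> 'b) set" where
  "sub_KV K V = {f. K \<subseteq> dom f \<and> (\<lambda>x. the (f x)) ` K \<subseteq> V}"

definition tau_iota_D :: "('a::topological_space \<rightharpoonup> 'b::topological_space) topology" where
  "tau_iota_D = topology_generated_by
     ({C_od \<inter> sub_KV K V | K V. compact K \<and> open V} \<union>
      {C_od \<inter> Dset -` W | W. openin fell_topology W})"

definition directed_set :: "('i \<Rightarrow> 'i \<Rightarrow> bool) \<Rightarrow> bool" where
  "directed_set le \<longleftrightarrow> (\<forall>x. le x x) \<and> (\<forall>x y z. le x y \<longrightarrow> le y z \<longrightarrow> le x z)
     \<and> (\<forall>x y. \<exists>z. le x z \<and> le y z)"

definition net_converges :: "('i \<Rightarrow> 'i \<Rightarrow> bool) \<Rightarrow> 'x topology \<Rightarrow> ('i \<Rightarrow> 'x) \<Rightarrow> 'x \<Rightarrow> bool" where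
  "net_converges le T x a \<longleftrightarrow> a \<in> topspace T \<and>
     (\<forall>U. openin T U \<and> a \<in> U \<longrightarrow> (\<exists>l0. \<forall>l. le l0 l \<longrightarrow> x l \<in> U))"

definition gamma_Cauchy :: "('i \<Rightarrow> 'i \<Rightarrow> bool) \<Rightarrow> ('i \<Rightarrow> ('a::topological_space \<rightharpoonup> 'b::metric_space)) \<Rightarrow> bool" where
  "gamma_Cauchy le f \<longleftrightarrow> (\<exists>A. closed A \<and> net_converges le fell_topology (\<lambda>l. Dset (f l)) A \<and>
     (A \<noteq> UNIV \<longrightarrow>
       (\<forall>K. compact K \<and> K \<noteq> {} \<and> K \<subseteq> - A \<longrightarrow>
          (\<exists>lK. (\<forall>l. le lK l \<longrightarrow> K \<subseteq> dom (f l)) \<and>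
               (\<forall>e>0. \<exists>l1. le lK l1 \<and> (\<forall>l m. le l1 l \<longrightarrow> le l1 m \<longrightarrow>
                   (\<forall>x\<in>K. dist (the (f l x)) (the (f m x)) < e)))))))"

end

theory Submission
  imports Defs
begin

definition netF :: "('i \<Rightarrow> 'i \<Rightarrow> bool) \<Rightarrow> 'i filter" where
  "netF le = (INF l0. principal {l. le l0 l})"

lemma eventually_netF:
  assumes "directed_set le"
  shows "eventually P (netF le) \<longleftrightarrow> (\<exists>l0. \<forall>l. le l0 l \<longrightarrow> P l)"
proof -
  have "eventually P (netF le) \<longleftrightarrow> (\<exists>b\<in>UNIV. eventually P (principal {l. le b l}))"
    unfolding netF_def
  proof (rule eventually_INF_base)
    have dir: "\<And>x y. \<exists>z. le x z \<and> le y z" and tr: "\<And>x y z. le x y \<Longrightarrow> le y z \<Longrightarrow> le x z"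
      using assms unfolding directed_set_def by blast+
    show "\<exists>x\<in>UNIV. principal {l. le x l} \<le> inf (principal {l. le a l}) (principal {l. le b l})"
      if "a \<in> UNIV" "b \<in> UNIV" for a b
    proof -
      obtain z where z: "le a z" "le b z" using dir by blast
      have "{l. le z l} \<subseteq> {l. le a l} \<inter> {l. le b l}" using z tr by blast
      then have "principal {l. le z l} \<le> inf (principal {l. le a l}) (principal {l. le b l})"
        by (simp add: inf_principal)
      then show "\<exists>x\<in>UNIV. principal {l. le x l} \<le> inf (principal {l. le a l}) (principal {l. le b l})"
        by blast
    qed
  qed simp
  then show ?thesis by (auto simp: eventually_principal)
qed

lemma netF_nonbot:
  assumes "directed_set le"
  shows "netF le \<noteq> bot"
proof
  assume "netF le = bot"
  then have "eventually (\<lambda>_. False) (netF le)" by simp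
  then obtain l0 where "\<And>l. le l0 l \<Longrightarrow> False" unfolding eventually_netF[OF assms] by blast
  moreover have "le l0 l0" using assms unfolding directed_set_def by blast
  ultimately show False by blast
qed

lemma net_converges_iff:
  assumes "directed_set le"
  shows "net_converges le T x a \<longleftrightarrow> a \<in> topspace T \<and>
     (\<forall>U. openin T U \<and> a \<in> U \<longrightarrow> eventually (\<lambda>l. x l \<in> U) (netF le))"
  unfolding net_converges_def eventually_netF[OF assms] by simp

lemma net_converges_generated:
  assumes dir: "directed_set le" and a: "a \<in> \<Union>B"
    and sub: "\<And>S. S \<in> B \<Longrightarrow> a \<in> S \<Longrightarrow> eventually (\<lambda>l. x l \<in> S) (netF le)"
  shows "net_converges le (topology_generated_by B) x a"
proof -
  have "generate_topology_on B U \<Longrightarrow> a \<in> U \<Longrightarrow> eventually (\<lambda>l. x l \<in> U) (netF le)" for U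
  proof (induction rule: generate_topology_on.induct)
    case (Int a1 b1)
    then show ?case by (auto intro: eventually_conj)
  next
    case (UN K)
    then obtain k where "k \<in> K" "a \<in> k" by blast
    then have "eventually (\<lambda>l. x l \<in> k) (netF le)" using UN.IH by blast
    then show ?case by (rule eventually_mono) (use \<open>k \<in> K\<close> in blast)
  qed (auto simp: sub)
  then show ?thesis
    unfolding net_converges_iff[OF dir] using a
    by (simp add: openin_topology_generated_by_iff)
qed

lemma topspace_fell: "topspace fell_topology = {A. closed A}"
proof -
  have "closed A \<Longrightarrow> A \<in> {A. closed A \<and> A \<subseteq> - {}}" for A :: "'a set" by simp
  then show ?thesis
    unfolding fell_topology_def topology_generated_by_topspace
    by (auto simp del: Compl_empty_eq)
qed

lemma C_od_closed_D: "g \<in> C_od \<Longrightarrow> closed (Dset g)"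
  unfolding C_od_def Dset_def by (auto simp: closed_def)

lemma topspace_tau: "topspace tau_iota_D = C_od"
proof -
  have "C_od \<inter> Dset -` topspace fell_topology = C_od"
    using C_od_closed_D topspace_fell by auto
  moreover have "openin fell_topology (topspace fell_topology)" by simp
  ultimately show ?thesis
    unfolding tau_iota_D_def topology_generated_by_topspace by blast
qed

lemma lc_base:
  fixes W :: "'a::t2_space set"
  assumes "locally_compact_space (euclidean :: 'a topology)" "open W" "x \<in> W"
  shows "\<exists>U V. open U \<and> compact V \<and> x \<in> U \<and> U \<subseteq> V \<and> V \<subseteq> W"
proof -
  have "Hausdorff_space (euclidean :: 'a topology)"
    unfolding Hausdorff_space_def disjnt_def using hausdorff by auto
  then have "neighbourhood_base_of (compactin euclidean) (euclidean :: 'a topology)"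
    using assms(1) locally_compact_space_neighbourhood_base by blast
  then show ?thesis using assms(2,3) unfolding neighbourhood_base_of by simp
qed

theorem mainTheorem8:
  fixes le :: "'i \<Rightarrow> 'i \<Rightarrow> bool"
    and f :: "'i \<Rightarrow> ('a::{t2_space, second_countable_topology} \<rightharpoonup> 'b::complete_space)"
  assumes "locally_compact_space (euclidean :: 'a topology)"
    and "directed_set le"
    and "\<And>l. f l \<in> C_od"
  shows "gamma_Cauchy le f \<longleftrightarrow> (\<exists>g \<in> C_od. net_converges le tau_iota_D f g)"
proof -
  define F where "F = netF le"
  have evF: "\<And>P. eventually P F \<longleftrightarrow> (\<exists>l0. \<forall>l. le l0 l \<longrightarrow> P l)"
    unfolding F_def by (rule eventually_netF[OF assms(2)])
  have Fnb: "F \<noteq> bot" unfolding F_def by (rule netF_nonbot[OF assms(2)])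
  have dir: "\<And>x y. \<exists>z. le x z \<and> le y z" and trans: "\<And>x y z. le x y \<Longrightarrow> le y z \<Longrightarrow> le x z"
    using assms(2) unfolding directed_set_def by blast+
  define h where "h = (\<lambda>l x. the (f l x))"
  define B :: "('a \<rightharpoonup> 'b) set set" where "B = ({C_od \<inter> sub_KV K V | K V. compact K \<and> open V} \<union>
      {C_od \<inter> Dset -` W | W. openin fell_topology W})"
  have tau: "tau_iota_D = topology_generated_by B" unfolding tau_iota_D_def B_def ..
  have fell_conv: "net_converges le fell_topology x a \<longleftrightarrow> closed a \<and>
     (\<forall>W. openin fell_topology W \<and> a \<in> W \<longrightarrow> eventually (\<lambda>l. x l \<in> W) F)"
    for x :: "'i \<Rightarrow> 'a set" and a
    unfolding net_converges_iff[OF assms(2)] topspace_fell F_def by simp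
  have fC: "open (dom (f l))" "continuous_on (dom (f l)) (h l)" for l
    using assms(3)[of l] unfolding C_od_def h_def by auto
  show ?thesis
  proof
    assume "gamma_Cauchy le f"
    then obtain A where A: "closed A" "net_converges le fell_topology (\<lambda>l. Dset (f l)) A"
      and C0: "A \<noteq> UNIV \<longrightarrow>
       (\<forall>K. compact K \<and> K \<noteq> {} \<and> K \<subseteq> - A \<longrightarrow>
          (\<exists>lK. (\<forall>l. le lK l \<longrightarrow> K \<subseteq> dom (f l)) \<and>
               (\<forall>e>0. \<exists>l1. le lK l1 \<and> (\<forall>l m. le l1 l \<longrightarrow> le l1 m \<longrightarrow>
                   (\<forall>x\<in>K. dist (the (f l x)) (the (f m x)) < e)))))"
      unfolding gamma_Cauchy_def by (elim exE conjE) (rule that)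
    have C: "\<exists>lK. (\<forall>l. le lK l \<longrightarrow> K \<subseteq> dom (f l)) \<and>
               (\<forall>e>0. \<exists>l1. le lK l1 \<and> (\<forall>l m. le l1 l \<longrightarrow> le l1 m \<longrightarrow>
                   (\<forall>x\<in>K. dist (the (f l x)) (the (f m x)) < e)))"
      if "A \<noteq> UNIV" "compact K" "K \<noteq> {}" "K \<subseteq> -A" for K
    proof -
      from C0 that(1) have "\<forall>K. compact K \<and> K \<noteq> {} \<and> K \<subseteq> - A \<longrightarrow>
          (\<exists>lK. (\<forall>l. le lK l \<longrightarrow> K \<subseteq> dom (f l)) \<and>
               (\<forall>e>0. \<exists>l1. le lK l1 \<and> (\<forall>l m. le l1 l \<longrightarrow> le l1 m \<longrightarrow>
                   (\<forall>x\<in>K. dist (the (f l x)) (the (f m x)) < e))))" by (rule mp)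
      then show ?thesis using that(2-4) by (elim allE impE) simp_all
    qed
    have C2: "eventually (\<lambda>l. K \<subseteq> dom (f l)) F \<and> (\<forall>e>0. \<exists>l1. \<forall>l m. le l1 l \<longrightarrow> le l1 m \<longrightarrow>
                   (\<forall>x\<in>K. dist (h l x) (h m x) < e))" if K: "compact K" "K \<subseteq> -A" for K
    proof (cases "K = {}")
      case True
      then show ?thesis by auto
    next
      case False
      then have "A \<noteq> UNIV" using K by auto
      from C[OF this K(1) False K(2)] obtain lK where
        "\<forall>l. le lK l \<longrightarrow> K \<subseteq> dom (f l)" "\<forall>e>0. \<exists>l1. le lK l1 \<and> (\<forall>l m. le l1 l \<longrightarrow> le l1 m \<longrightarrow>
                   (\<forall>x\<in>K. dist (the (f l x)) (the (f m x)) < e))" by blast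
      then show ?thesis unfolding evF h_def by blast
    qed
    have "\<exists>c. ((\<lambda>l. h l x) \<longlongrightarrow> c) F" if x: "x \<notin> A" for x
    proof -
      have "cauchy_filter (filtermap (\<lambda>l. h l x) F)"
        unfolding cauchy_filter_metric_filtermap
      proof (intro allI impI)
        fix e :: real assume "e > 0"
        then obtain l1 where l1: "\<forall>l m. le l1 l \<longrightarrow> le l1 m \<longrightarrow> (\<forall>y\<in>{x}. dist (h l y) (h m y) < e)"
          using C2[of "{x}"] x by auto
        show "\<exists>P. eventually P F \<and> (\<forall>y z. P y \<and> P z \<longrightarrow> dist (h y x) (h z x) < e)"
          by (rule exI[of _ "\<lambda>l. le l1 l"]) (use l1 in \<open>auto simp: evF\<close>)
      qed
      from cauchy_filter_complete_converges[OF this complete_UNIV]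
      obtain c where "filtermap (\<lambda>l. h l x) F \<le> nhds c"
        using Fnb by (auto simp: filtermap_bot_iff)
      then show ?thesis unfolding filterlim_def by blast
    qed
    then have "\<forall>x\<in>-A. \<exists>c. ((\<lambda>l. h l x) \<longlongrightarrow> c) F" by blast
    from bchoice[OF this] obtain L where L0: "\<forall>x\<in>-A. ((\<lambda>l. h l x) \<longlongrightarrow> L x) F" by blast
    have L: "\<And>x. x \<notin> A \<Longrightarrow> ((\<lambda>l. h l x) \<longlongrightarrow> L x) F" using L0 by blast
    have UL: "eventually (\<lambda>l. K \<subseteq> dom (f l)) F \<and> uniform_limit K h L F"
      if K: "compact K" "K \<subseteq> -A" for K
    proof
      show "eventually (\<lambda>l. K \<subseteq> dom (f l)) F" using C2[OF K] by blast
      show "uniform_limit K h L F"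
        unfolding uniform_limit_iff
      proof (intro allI impI)
        fix e :: real assume "e > 0"
        then obtain l1 where l1: "\<And>l m x. le l1 l \<Longrightarrow> le l1 m \<Longrightarrow> x \<in> K \<Longrightarrow> dist (h l x) (h m x) < e/2"
          using C2[OF K] by (metis half_gt_zero)
        have "dist (h l x) (L x) \<le> e/2" if "le l1 l" "x \<in> K" for l x
        proof (rule tendsto_upperbound[OF _ _ Fnb])
          show "((\<lambda>m. dist (h l x) (h m x)) \<longlongrightarrow> dist (h l x) (L x)) F"
            using L[of x] that K by (intro tendsto_intros) auto
          show "eventually (\<lambda>m. dist (h l x) (h m x) \<le> e/2) F"
            unfolding evF using l1 that less_imp_le by blast
        qed
        moreover have "e/2 < e" using \<open>e > 0\<close> by simp
        ultimately have "\<forall>l. le l1 l \<longrightarrow> (\<forall>x\<in>K. dist (h l x) (L x) < e)"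
          by (meson le_less_trans)
        then show "eventually (\<lambda>l. \<forall>x\<in>K. dist (h l x) (L x) < e) F"
          unfolding evF by blast
      qed
    qed
    have opA: "open (-A)" using A(1) by auto
    have contL: "continuous_on (-A) L"
      unfolding continuous_on_eq_continuous_at[OF opA]
    proof
      fix x assume "x \<in> -A"
      then obtain U V where UV: "open U" "compact V" "x \<in> U" "U \<subseteq> V" "V \<subseteq> -A"
        using lc_base[OF assms(1) opA \<open>x \<in> -A\<close>] by (elim exE conjE) (rule that)
      have ev: "eventually (\<lambda>l. V \<subseteq> dom (f l)) F" using UL[OF UV(2,5)] by (rule conjunct1)
      have ul: "uniform_limit V h L F" using UL[OF UV(2,5)] by (rule conjunct2)
      have "eventually (\<lambda>l. continuous_on V (h l)) F"
        using ev
      proof (rule eventually_mono)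
        fix l assume "V \<subseteq> dom (f l)"
        then show "continuous_on V (h l)" by (rule continuous_on_subset[OF fC(2)])
      qed
      from uniform_limit_theorem[OF this ul] Fnb have "continuous_on V L" by auto
      then have "continuous_on U L" using UV(4) continuous_on_subset by blast
      then show "isCont L x" using UV(1,3) continuous_on_eq_continuous_at by blast
    qed
    define g where "g = (\<lambda>x. if x \<in> A then None else Some (L x))"
    have domg: "dom g = -A" unfolding g_def dom_def by auto
    have Dg: "Dset g = A" unfolding Dset_def domg by simp
    have gL: "x \<in> -A \<Longrightarrow> the (g x) = L x" for x unfolding g_def by auto
    have gC: "g \<in> C_od"
    proof -
      have "continuous_on (-A) (\<lambda>x. the (g x))"
        using contL by (rule continuous_on_eq) (simp add: gL)
      then show ?thesis unfolding C_od_def using opA domg by simp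
    qed
    have "net_converges le tau_iota_D f g"
      unfolding tau
    proof (rule net_converges_generated[OF assms(2)])
      have "openin fell_topology (topspace fell_topology)" by simp
      moreover have "g \<in> C_od \<inter> Dset -` topspace fell_topology"
        using gC C_od_closed_D topspace_fell by auto
      ultimately show "g \<in> \<Union>B" unfolding B_def by blast
    next
      fix S assume "S \<in> B" "g \<in> S"
      then consider K V where "S = C_od \<inter> sub_KV K V" "compact K" "open V"
        | W where "S = C_od \<inter> Dset -` W" "openin fell_topology W"
        unfolding B_def by blast
      then show "eventually (\<lambda>l. f l \<in> S) (netF le)"
      proof cases
        case (1 K V)
        with \<open>g \<in> S\<close> have KA: "K \<subseteq> -A" and GV: "(\<lambda>x. the (g x)) ` K \<subseteq> V"
          unfolding sub_KV_def by (auto simp: domg)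
        have LV: "L ` K \<subseteq> V"
        proof
          fix y assume "y \<in> L ` K"
          then obtain x where x: "x \<in> K" "y = L x" by blast
          then have "the (g x) = L x" using KA gL by blast
          moreover have "the (g x) \<in> V" using GV x(1) by blast
          ultimately show "y \<in> V" using x(2) by simp
        qed
        have "compact (L ` K)"
          using 1(2) contL KA by (metis compact_continuous_image continuous_on_subset)
        then obtain e where e: "e > 0" "\<And>y. y \<in> L ` K \<Longrightarrow> ball y e \<subseteq> V"
          using Heine_Borel_lemma[of "L ` K" "{V}"] LV 1(3) by auto
        from UL[OF 1(2) KA] e(1) have "eventually (\<lambda>l. K \<subseteq> dom (f l)) F"
          "eventually (\<lambda>l. \<forall>x\<in>K. dist (h l x) (L x) < e) F"
          by (auto simp: uniform_limit_iff)
        then have "eventually (\<lambda>l. f l \<in> S) F"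
        proof (rule eventually_elim2)
          fix l assume l: "K \<subseteq> dom (f l)" "\<forall>x\<in>K. dist (h l x) (L x) < e"
          have "h l x \<in> V" if "x \<in> K" for x
            using e(2)[of "L x"] l(2) that by (auto simp: dist_commute)
          then show "f l \<in> S" using 1(1) assms(3) l(1) unfolding sub_KV_def h_def by auto
        qed
        then show ?thesis unfolding F_def .
      next
        case (2 W)
        with \<open>g \<in> S\<close> have "A \<in> W" using Dg by auto
        with A(2) 2(2) have "eventually (\<lambda>l. Dset (f l) \<in> W) F"
          unfolding fell_conv by blast
        then show ?thesis unfolding F_def[symmetric] 2(1)
          by (rule eventually_mono) (use assms(3) in auto)
      qed
    qed
    with gC show "\<exists>g \<in> C_od. net_converges le tau_iota_D f g" by blast
  next
    assume "\<exists>g \<in> C_od. net_converges le tau_iota_D f g"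
    then obtain g where gC: "g \<in> C_od" and conv: "net_converges le tau_iota_D f g" by blast
    define G where "G = (\<lambda>x. the (g x))"
    have contG: "continuous_on (dom g) G" and opg: "open (dom g)"
      using gC unfolding C_od_def G_def by auto
    have ev_open: "\<And>S. S \<in> B \<Longrightarrow> g \<in> S \<Longrightarrow> eventually (\<lambda>l. f l \<in> S) F"
      using conv unfolding net_converges_iff[OF assms(2)] F_def[symmetric] tau
      by (simp add: topology_generated_by_Basis)
    define A where "A = Dset g"
    have clA: "closed A" unfolding A_def using gC by (rule C_od_closed_D)
    have fconv: "net_converges le fell_topology (\<lambda>l. Dset (f l)) A"
      unfolding fell_conv
    proof (intro conjI allI impI)
      fix W assume W: "openin fell_topology W \<and> A \<in> W"
      have "openin fell_topology W" using W by (rule conjunct1)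
      then have "C_od \<inter> Dset -` W \<in> {C_od \<inter> Dset -` W' | W'. openin fell_topology W'}" by blast
      then have m1: "C_od \<inter> Dset -` W \<in> B" unfolding B_def by (rule UnI2)
      have "Dset g \<in> W" using W unfolding A_def by (rule conjunct2)
      then have m2: "g \<in> C_od \<inter> Dset -` W" using gC by blast
      have "eventually (\<lambda>l. f l \<in> C_od \<inter> Dset -` W) F" by (rule ev_open[OF m1 m2])
      then show "eventually (\<lambda>l. Dset (f l) \<in> W) F"
        by (rule eventually_mono) simp
    qed (rule clA)
    have core: "eventually (\<lambda>l. K \<subseteq> dom (f l) \<and> (\<forall>x\<in>K. dist (h l x) (G x) < e)) F"
      if K: "compact K" "K \<subseteq> dom g" and e: "e > 0" for K e
    proof -
      have "\<exists>U V. open U \<and> compact V \<and> x \<in> U \<and> U \<subseteq> V \<and> V \<subseteq> dom g \<inter> G -` ball (G x) (e/2)"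
        if "x \<in> K" for x
      proof -
        have xin: "x \<in> dom g \<inter> G -` ball (G x) (e/2)" using that K e by auto
        show ?thesis by (rule lc_base[OF assms(1) continuous_open_preimage[OF contG opg open_ball] xin])
      qed
      then have "\<forall>x\<in>K. \<exists>U V. open U \<and> compact V \<and> x \<in> U \<and> U \<subseteq> V \<and> V \<subseteq> dom g \<inter> G -` ball (G x) (e/2)"
        by blast
      from bchoice[OF this] obtain U where "\<forall>x\<in>K. \<exists>V. open (U x) \<and> compact V \<and> x \<in> U x \<and> U x \<subseteq> V \<and> V \<subseteq> dom g \<inter> G -` ball (G x) (e/2)"
        by blast
      from bchoice[OF this] obtain V where UV0: "\<forall>x\<in>K. open (U x) \<and> compact (V x) \<and> x \<in> U x \<and> U x \<subseteq> V x \<and> V x \<subseteq> dom g \<inter> G -` ball (G x) (e/2)"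
        by blast
      have UV: "\<And>x. x \<in> K \<Longrightarrow> open (U x) \<and> compact (V x) \<and> x \<in> U x \<and> U x \<subseteq> V x
          \<and> V x \<subseteq> dom g \<inter> G -` ball (G x) (e/2)" using UV0 by blast
      obtain C' where C': "C' \<subseteq> K" "finite C'" "K \<subseteq> (\<Union>c\<in>C'. U c)"
        proof (rule compactE_image[OF K(1), of K U])
        show "\<And>T. T \<in> K \<Longrightarrow> open (U T)" using UV by blast
        show "K \<subseteq> (\<Union>c\<in>K. U c)" using UV by blast
      qed blast
      have "\<forall>c\<in>C'. eventually (\<lambda>l. f l \<in> C_od \<inter> sub_KV (V c) (ball (G c) (e/2))) F"
      proof
        fix c assume "c \<in> C'"
        then have c: "c \<in> K" using C' by auto
        show "eventually (\<lambda>l. f l \<in> C_od \<inter> sub_KV (V c) (ball (G c) (e/2))) F"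
        proof (rule ev_open)
          show "C_od \<inter> sub_KV (V c) (ball (G c) (e / 2)) \<in> B"
            unfolding B_def using UV[OF c] by blast
          show "g \<in> C_od \<inter> sub_KV (V c) (ball (G c) (e / 2))"
            unfolding sub_KV_def using UV[OF c] gC by (auto simp: G_def)
        qed
      qed
      from eventually_ball_finite[OF C'(2) this]
      show ?thesis
      proof (rule eventually_mono)
        fix l assume l: "\<forall>c\<in>C'. f l \<in> C_od \<inter> sub_KV (V c) (ball (G c) (e / 2))"
        have "x \<in> dom (f l) \<and> dist (h l x) (G x) < e" if "x \<in> K" for x
        proof -
          obtain c where c: "c \<in> C'" "x \<in> U c" using C'(3) \<open>x \<in> K\<close> by blast
          then have cK: "c \<in> K" using C' by auto
          have xV: "x \<in> V c" using UV[OF cK] c by auto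
          have s: "f l \<in> sub_KV (V c) (ball (G c) (e/2))" using l c by blast
          then have "x \<in> dom (f l)" "h l x \<in> ball (G c) (e/2)"
            unfolding sub_KV_def h_def using xV by blast+
          then have "x \<in> dom (f l)" "dist (G c) (h l x) < e/2" by simp_all
          moreover have "dist (G c) (G x) < e/2" using UV[OF cK] xV by auto
          ultimately show ?thesis using dist_triangle3[of "h l x" "G x" "G c"] by auto
        qed
        then show "K \<subseteq> dom (f l) \<and> (\<forall>x\<in>K. dist (h l x) (G x) < e)" by auto
      qed
    qed
    show "gamma_Cauchy le f"
      unfolding gamma_Cauchy_def
    proof (intro exI[of _ A] conjI impI allI clA fconv)
      fix K assume K: "compact K \<and> K \<noteq> {} \<and> K \<subseteq> - A"
      then have K': "compact K" "K \<subseteq> dom g" unfolding A_def Dset_def by auto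
      from core[OF K' zero_less_one] obtain lK where lK: "\<And>l. le lK l \<Longrightarrow> K \<subseteq> dom (f l)"
        unfolding evF by blast
      show "\<exists>lK. (\<forall>l. le lK l \<longrightarrow> K \<subseteq> dom (f l)) \<and>
               (\<forall>e>0. \<exists>l1. le lK l1 \<and> (\<forall>l m. le l1 l \<longrightarrow> le l1 m \<longrightarrow>
                   (\<forall>x\<in>K. dist (the (f l x)) (the (f m x)) < e)))"
      proof (rule exI[of _ lK], intro conjI allI impI)
        fix l assume "le lK l" then show "K \<subseteq> dom (f l)" by (rule lK)
      next
        fix e :: real assume "e > 0"
        then have "e/2 > 0" by simp
        from core[OF K' this] obtain l2 where
          l2: "\<And>l. le l2 l \<Longrightarrow> (\<forall>x\<in>K. dist (h l x) (G x) < e/2)"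
          unfolding evF by blast
        obtain z where z: "le lK z" "le l2 z" using dir by blast
        show "\<exists>l1. le lK l1 \<and> (\<forall>l m. le l1 l \<longrightarrow> le l1 m \<longrightarrow>
                   (\<forall>x\<in>K. dist (the (f l x)) (the (f m x)) < e))"
        proof (intro exI[of _ z] conjI allI impI ballI z(1))
          fix l m x assume "le z l" "le z m" "x \<in> K"
          then have "dist (h l x) (G x) < e/2" "dist (h m x) (G x) < e/2"
            using l2 trans z(2) by blast+
          then show "dist (the (f l x)) (the (f m x)) < e"
            using dist_triangle2[of "h l x" "h m x" "G x"] unfolding h_def by auto
        qed
      qed
    qed
  qed
qed

end
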